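(* Let $k\in\mathbb{Z}$, let $m$ be an odd positive integer, and let $p>1$ be an odd integer. Then $$S_{p}^{(k)}(1,m)=\sum_{i=1}^{p-2}\sum_{\nu=0}^{p-i}\binom{p}{\nu}\binom{p-\nu+1}{i}E_{\nu}^{(k)}E_{i}m^{p-i}+(p+1)E_{p}+m^{p}E_{p}^{(k)}(1),$$ where $S_p^{(k)}(1,m):=m^{p}T_{p}^{(k)}(1,m)-2\sum_{\nu=0}^{p}\binom{p}{\nu}E_{\nu}^{(k)}E_{p+1-\nu}m^{\nu-1}$. Equivalently, $$m^{p}T_{p}^{(k)}(1,m)=\sum_{i=1}^{p-2}\sum_{\nu=0}^{p-i}\binom{p}{\nu}\binom{p-\nu+1}{i}E_{\nu}^{(k)}E_{i}m^{p-i}+(p+1)E_{p}+m^{p}E_{p}^{(k)}(1)+2\sum_{\nu=0}^{p}\binom{p}{\nu}E_{\nu}^{(k)}E_{p+1-\nu}m^{\nu-1}.$$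
   Context: Euler polynomials $E_n(x)$ are defined by $\frac{2}{e^t+1}e^{xt}=\sum_{n=0}^{\infty}E_n(x)\frac{t^n}{n!}$ and $E_n=E_n(0)$. For $k\in\mathbb{Z}$, $\mathrm{Ei}_k(x)=\sum_{n=1}^{\infty}\frac{x^n}{n^k(n-1)!}$; the poly-Genocchi polynomials $G_n^{(k)}(x)$ are defined by $\frac{2\,\mathrm{Ei}_k(\log(1+t))}{e^t+1}e^{xt}=\sum_{n=0}^{\infty}G_n^{(k)}(x)\frac{t^n}{n!}$; the poly-Euler polynomials are $E_n^{(k)}(x)=\frac{G_{n+1}^{(k)}(x)}{n+1}$ ($n\ge0$), $E_n^{(k)}=E_n^{(k)}(0)$, and the poly-Euler functions are $\overline{E}_n^{(k)}(x)=E_n^{(k)}(x-[x])$, where $[x]$ is the greatest integer $\le x$. For positive integers $h,m,p$, the poly-Dedekind type DC sum is $T_p^{(k)}(h,m)=2\sum_{\mu=1}^{m-1}(-1)^{\mu}\frac{\mu}{m}\overline{E}_p^{(k)}\big(\frac{h\mu}{m}\big)$. *)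

theory Defs
  imports Complex_Main "HOL-Computational_Algebra.Formal_Power_Series"
begin

definition euler_poly :: "nat \<Rightarrow> real \<Rightarrow> real" where
  "euler_poly n x = fact n * fps_nth (fps_const 2 * fps_exp x / (fps_exp 1 + 1)) n"

definition euler_num :: "nat \<Rightarrow> real" where
  "euler_num n = euler_poly n 0"

definition Ei_fps :: "int \<Rightarrow> real fps" where
  "Ei_fps k = Abs_fps (\<lambda>n. if n = 0 then 0 else 1 / ((real n) powi k * fact (n - 1)))"

text \<open>Poly-Genocchi polynomials: 2 Ei_k(log(1+t)) e^{xt}/(e^t+1); fps_ln 1 = log(1+t).\<close>
definition poly_genocchi :: "int \<Rightarrow> nat \<Rightarrow> real \<Rightarrow> real" where
  "poly_genocchi k n x =
     fact n * fps_nth (fps_const 2 * (Ei_fps k oo fps_ln 1) * fps_exp x / (fps_exp 1 + 1)) n"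

definition poly_euler :: "int \<Rightarrow> nat \<Rightarrow> real \<Rightarrow> real" where
  "poly_euler k n x = poly_genocchi k (n + 1) x / real (n + 1)"

definition poly_euler_num :: "int \<Rightarrow> nat \<Rightarrow> real" where
  "poly_euler_num k n = poly_euler k n 0"

definition poly_euler_fun :: "int \<Rightarrow> nat \<Rightarrow> real \<Rightarrow> real" where
  "poly_euler_fun k n x = poly_euler k n (x - of_int \<lfloor>x\<rfloor>)"

definition poly_DC_sum :: "int \<Rightarrow> nat \<Rightarrow> nat \<Rightarrow> nat \<Rightarrow> real" where
  "poly_DC_sum k p h m =
     2 * (\<Sum>\<mu>=1..m-1. (-1) ^ \<mu> * (real \<mu> / real m) * poly_euler_fun k p (real h * real \<mu> / real m))"

end

theory Submission
  imports Defs
begin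

unbundle fps_syntax

definition eD :: "real fps" where "eD = fps_exp 1 + 1"
definition eA :: "real fps" where "eA = fps_const 2 * inverse eD"
definition eB :: "int \<Rightarrow> real fps" where
  "eB k = fps_const 2 * (Ei_fps k oo fps_ln 1) * inverse eD"

lemma eD0: "eD $ 0 = 2" by (simp add: eD_def)

lemma eA_D: "eA * eD = fps_const 2"
proof -
  have "inverse eD * eD = 1" using eD0 by (intro inverse_mult_eq_1) simp
  thus ?thesis unfolding eA_def by (metis mult.assoc mult.right_neutral)
qed

lemma euler_poly_eA: "euler_poly n x = fact n * (eA * fps_exp x) $ n"
proof -
  have "(fps_exp (1::real) + 1) $ 0 \<noteq> 0" by simp
  thus ?thesis unfolding euler_poly_def eA_def eD_def
    by (simp add: fps_divide_unit ac_simps)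
qed

lemma poly_genocchi_eB: "poly_genocchi k n x = fact n * (eB k * fps_exp x) $ n"
proof -
  have "(fps_exp (1::real) + 1) $ 0 \<noteq> 0" by simp
  thus ?thesis unfolding poly_genocchi_def eB_def eD_def
    by (simp add: fps_divide_unit ac_simps)
qed

lemma appell:
  "fact n * ((g::real fps) * fps_exp x) $ n = (\<Sum>j\<le>n. real (n choose j) * (fact j * g$j) * x^(n-j))"
proof -
  have "fact n * (g * fps_exp x) $ n = (\<Sum>j\<le>n. fact n * (g$j * (x^(n-j) / fact (n-j))))"
    by (simp add: fps_mult_nth atLeast0AtMost sum_distrib_left)
  also have "\<dots> = (\<Sum>j\<le>n. real (n choose j) * (fact j * g$j) * x^(n-j))"
  proof (rule sum.cong)
    fix j assume "j \<in> {..n}"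
    hence "j \<le> n" by simp
    thus "fact n * (g$j * (x^(n-j) / fact (n-j))) = real (n choose j) * (fact j * g$j) * x^(n-j)"
      by (simp add: binomial_fact field_simps)
  qed simp
  finally show ?thesis .
qed

lemma euler_num_eA: "euler_num j = fact j * eA $ j"
  by (simp add: euler_num_def euler_poly_eA)

lemma euler_poly_appell: "euler_poly n x = (\<Sum>i\<le>n. real (n choose i) * euler_num i * x^(n-i))"
  by (simp add: euler_poly_eA appell euler_num_eA)

lemma eB0: "eB k $ 0 = 0" by (simp add: eB_def Ei_fps_def)

lemma poly_euler_num_eB: "poly_euler_num k j = fact j * eB k $ Suc j"
  by (simp add: poly_euler_num_def poly_euler_def poly_genocchi_eB fps_mult_nth eB0 field_simps)

lemma poly_euler_appell:
  "poly_euler k n x = (\<Sum>v\<le>n. real (n choose v) * poly_euler_num k v * x^(n-v))"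
proof -
  have "poly_euler k n x = fact (Suc n) * (eB k * fps_exp x) $ Suc n / real (Suc n)"
    by (simp add: poly_euler_def poly_genocchi_eB)
  also have "\<dots> = (\<Sum>j\<le>Suc n. real (Suc n choose j) * (fact j * eB k $ j) * x^(Suc n-j)) / real (Suc n)"
    by (simp only: appell)
  also have "\<dots> = (\<Sum>v\<le>n. real (Suc n choose Suc v) * (fact (Suc v) * eB k $ Suc v) * x^(n-v)) / real (Suc n)"
    by (simp only: sum.atMost_Suc_shift eB0) simp
  also have "\<dots> = (\<Sum>v\<le>n. real (n choose v) * poly_euler_num k v * x^(n-v))"
    unfolding sum_divide_distrib
  proof (rule sum.cong)
    fix v assume "v \<in> {..n}"
    hence "v \<le> n" by simp
    have b: "real (Suc v) * real (Suc n choose Suc v) = real (Suc n) * real (n choose v)"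
      using Suc_times_binomial[of v n] by (metis of_nat_mult)
    have c: "real (Suc n choose Suc v) * fact (Suc v) / real (Suc n) = real (n choose v) * fact v"
    proof -
      have "real (Suc n choose Suc v) * fact (Suc v) / real (Suc n)
          = (real (Suc v) * real (Suc n choose Suc v)) * fact v / real (Suc n)"
        by (simp only: fact_Suc of_nat_mult) (simp add: ac_simps)
      also have "\<dots> = real (n choose v) * fact v" unfolding b by simp
      finally show ?thesis .
    qed
    have "real (Suc n choose Suc v) * (fact (Suc v) * eB k $ Suc v) * x^(n-v) / real (Suc n)
       = (real (Suc n choose Suc v) * fact (Suc v) / real (Suc n)) * eB k $ Suc v * x^(n-v)"
      by simp
    also have "\<dots> = real (n choose v) * poly_euler_num k v * x^(n-v)"
      unfolding c by (simp add: poly_euler_num_eB)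
    finally show "real (Suc n choose Suc v) * (fact (Suc v) * eB k $ Suc v) * x^(n-v) / real (Suc n) =
      real (n choose v) * poly_euler_num k v * x^(n-v)" .
  qed simp
  finally show ?thesis .
qed

lemma poly_euler_num_0: "poly_euler_num k 0 = 1"
proof -
  have C1: "(Ei_fps k oo fps_ln 1) $ 1 = 1"
    by (simp add: fps_compose_nth Ei_fps_def fps_ln_nth)
  have "eB k $ 1 = 1"
    unfolding eB_def using eD0 C1 by (simp add: Ei_fps_def)
  thus ?thesis by (simp add: poly_euler_num_eB)
qed

lemma euler_num_0: "euler_num 0 = 1"
  using eD0 by (simp add: euler_num_eA eA_def)

lemma euler_poly_shift: "euler_poly n (x + 1) + euler_poly n x = 2 * x ^ n"
proof -
  have "eA * fps_exp (x + 1) + eA * fps_exp x = (eA * eD) * fps_exp x"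
    by (simp add: fps_exp_add_mult eD_def algebra_simps)
  also have "\<dots> = fps_const 2 * fps_exp x" by (simp add: eA_D)
  finally have e: "eA * fps_exp (x + 1) + eA * fps_exp x = fps_const 2 * fps_exp x" .
  have "euler_poly n (x + 1) + euler_poly n x = fact n * (eA * fps_exp (x + 1) + eA * fps_exp x) $ n"
    by (simp add: euler_poly_eA algebra_simps)
  also have "\<dots> = 2 * x ^ n" unfolding e by simp
  finally show ?thesis .
qed

definition alt :: "real fps \<Rightarrow> real fps" where
  "alt f = Abs_fps (\<lambda>n. (-1)^n * f $ n)"

lemma alt_mult: "alt f * alt g = alt (f * g)"
proof (rule fps_ext)
  fix n
  have "(alt f * alt g) $ n = (\<Sum>i=0..n. (-1)^n * (f $ i * g $ (n - i)))"
    unfolding fps_mult_nth alt_def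
  proof (intro sum.cong refl)
    fix i assume "i \<in> {0..n}"
    hence "(-1::real)^i * (-1)^(n-i) = (-1)^n" by (simp flip: power_add)
    thus "Abs_fps (\<lambda>n. (-1) ^ n * f $ n) $ i * Abs_fps (\<lambda>n. (-1) ^ n * g $ n) $ (n - i) =
          (-1) ^ n * (f $ i * g $ (n - i))" by (simp add: algebra_simps)
  qed
  also have "\<dots> = alt (f * g) $ n" by (simp add: alt_def fps_mult_nth sum_distrib_left)
  finally show "(alt f * alt g) $ n = alt (f * g) $ n" .
qed

lemma euler_sym: "euler_poly n 1 = (-1)^n * euler_num n"
proof -
  have aD: "alt eD = fps_exp (-1) + 1"
    by (rule fps_ext) (simp add: alt_def eD_def power_divide)
  have "alt eA * (fps_exp (-1) + 1) = fps_const 2"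
    unfolding aD[symmetric] alt_mult eA_D by (rule fps_ext) (simp add: alt_def)
  hence "alt eA * (fps_exp (-1) + 1) * fps_exp 1 = fps_const 2 * fps_exp 1" by simp
  moreover have "fps_exp (-1::real) * fps_exp 1 = 1"
    by (simp flip: fps_exp_add_mult)
  hence "(fps_exp (-1) + 1) * fps_exp 1 = eD" by (simp add: eD_def distrib_right add.commute)
  ultimately have "alt eA * eD = fps_const 2 * fps_exp 1"
    by (metis mult.assoc)
  moreover have "eD * inverse eD = 1" using eD0 by (intro inverse_mult_eq_1') simp
  ultimately have "alt eA = eA * fps_exp 1"
  proof -
    assume h1: "alt eA * eD = fps_const 2 * fps_exp 1" and h2: "eD * inverse eD = 1"
    have "alt eA = alt eA * (eD * inverse eD)" using h2 by simp
    also have "\<dots> = (alt eA * eD) * inverse eD" by (simp only: mult.assoc)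
    also have "\<dots> = fps_const 2 * fps_exp 1 * inverse eD" by (simp only: h1)
    also have "\<dots> = eA * fps_exp 1" by (simp add: eA_def ac_simps)
    finally show ?thesis .
  qed
  hence "(eA * fps_exp 1) $ n = (-1)^n * eA $ n" by (metis alt_def fps_nth_Abs_fps)
  thus ?thesis by (simp add: euler_poly_eA euler_num_eA)
qed

lemma euler_num_even: "even n \<Longrightarrow> n \<ge> 2 \<Longrightarrow> euler_num n = 0"
  using euler_poly_shift[of n 0] euler_sym[of n] by (simp add: euler_num_def)

lemma alt_power_sum:
  "2 * (\<Sum>u<m. (-1)^u * real u ^ n) = euler_num n - (-1)^m * euler_poly n (real m)"
proof (induction m)
  case 0 thus ?case by (simp add: euler_num_def)
next
  case (Suc m)
  have "2 * (\<Sum>u<Suc m. (-1)^u * real u ^ n) = euler_num n - (-1)^m * euler_poly n (real m)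
     + (-1)^m * (2 * real m ^ n)" using Suc by (simp add: algebra_simps)
  also have "\<dots> = euler_num n - (-1)^Suc m * euler_poly n (real (Suc m))"
  proof -
    have h: "euler_poly n (1 + real m) = 2 * real m ^ n - euler_poly n (real m)"
      using euler_poly_shift[of n "real m"] by (metis add.commute eq_diff_eq)
    show ?thesis by (simp add: h algebra_simps)
  qed
  finally show ?case .
qed


lemma triangle_swap:
  fixes F :: "nat \<Rightarrow> nat \<Rightarrow> real"
  shows "(\<Sum>v\<le>p. \<Sum>i\<le>p-v. F v i) = (\<Sum>i\<le>p. \<Sum>v\<le>p-i. F v i)"
proof -
  have "(\<Sum>v\<le>p. \<Sum>i\<le>p-v. F v i) = (\<Sum>v\<le>p. \<Sum>i\<le>p. if v + i \<le> p then F v i else 0)"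
  proof (rule sum.cong[OF refl])
    fix v assume "v \<in> {..p}"
    have "(\<Sum>i\<le>p. if v + i \<le> p then F v i else 0) = (\<Sum>i\<le>p-v. if v + i \<le> p then F v i else 0)"
      by (rule sum.mono_neutral_right) auto
    also have "\<dots> = (\<Sum>i\<le>p-v. F v i)" using \<open>v \<in> {..p}\<close> by (intro sum.cong) auto
    finally show "(\<Sum>i\<le>p-v. F v i) = (\<Sum>i\<le>p. if v + i \<le> p then F v i else 0)" by simp
  qed
  also have "\<dots> = (\<Sum>i\<le>p. \<Sum>v\<le>p. if v + i \<le> p then F v i else 0)" by (rule sum.swap)
  also have "\<dots> = (\<Sum>i\<le>p. \<Sum>v\<le>p-i. F v i)"
  proof (rule sum.cong[OF refl])
    fix i assume "i \<in> {..p}"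
    have "(\<Sum>v\<le>p. if v + i \<le> p then F v i else 0) = (\<Sum>v\<le>p-i. if v + i \<le> p then F v i else 0)"
      by (rule sum.mono_neutral_right) auto
    also have "\<dots> = (\<Sum>v\<le>p-i. F v i)" using \<open>i \<in> {..p}\<close> by (intro sum.cong) auto
    finally show "(\<Sum>v\<le>p. if v + i \<le> p then F v i else 0) = (\<Sum>v\<le>p-i. F v i)" .
  qed
  finally show ?thesis .
qed

lemma DC_expand:
  assumes "m > 0"
  shows "poly_DC_sum k p 1 m =
    2 * (\<Sum>u<m. (-1)^u * (real u / real m) * poly_euler k p (real u / real m))"
proof -
  have fl: "poly_euler_fun k p (real u / real m) = poly_euler k p (real u / real m)"
    if "u < m" for u
  proof -
    have "\<lfloor>real u / real m\<rfloor> = 0" using that assms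
      by (subst floor_eq_iff) (simp add: field_simps)
    thus ?thesis by (simp add: poly_euler_fun_def)
  qed
  have set: "{..<m} = insert 0 {1..m-1}" using assms by auto
  show ?thesis unfolding poly_DC_sum_def set
    by (simp, intro sum.cong refl) (auto simp: fl)
qed

lemma powi_m1: "(M::real) \<noteq> 0 \<Longrightarrow> M powi (int v - 1) = M ^ v / M"
  by (simp add: power_int_diff power_int_of_nat)

theorem theorem11:
  fixes k :: int and m p :: nat
  assumes "odd m" and "m > 0" and "odd p" and "p > 1"
  shows "real m ^ p * poly_DC_sum k p 1 m =
    (\<Sum>i=1..p-2. \<Sum>\<nu>=0..p-i. real (p choose \<nu>) * real ((p - \<nu> + 1) choose i)
        * poly_euler_num k \<nu> * euler_num i * real m ^ (p - i))
    + real (p + 1) * euler_num p + real m ^ p * poly_euler k p 1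
    + 2 * (\<Sum>\<nu>=0..p. real (p choose \<nu>) * poly_euler_num k \<nu> * euler_num (p + 1 - \<nu>)
        * real m powi (int \<nu> - 1))"
proof -
  define M where "M = real m"
  have M0: "M > 0" using assms by (simp add: M_def)
  define PE where "PE = poly_euler_num k"
  define e where "e = euler_num"
  define F where "F = (\<lambda>v i. real (p choose v) * real ((p - v + 1) choose i) * PE v * e i * M ^ (p - i))"
  define H where "H = (\<lambda>v. real (p choose v) * PE v * e (p + 1 - v) * M powi (int v - 1))"
  have term1: "M^p * ((real u / M) * (real u / M)^(p-v)) = M^v / M * real u ^ (p+1-v)"
    if "v \<le> p" for u v
  proof -
    have a: "M^p = M^v * M^(p-v)" using that by (simp flip: power_add)
    have b: "real u ^ (p+1-v) = real u * real u ^ (p-v)" using that by (simp add: Suc_diff_le)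
    show ?thesis unfolding a b using M0 by (simp add: power_divide field_simps)
  qed
  have S2: "M^p * poly_DC_sum k p 1 m =
     (\<Sum>v\<le>p. real (p choose v) * PE v * (M^v / M) * (2 * (\<Sum>u<m. (-1)^u * real u ^ (p+1-v))))"
  proof -
    have "M^p * poly_DC_sum k p 1 m =
      (\<Sum>u<m. \<Sum>v\<le>p. 2 * (-1)^u * (real (p choose v) * PE v) * (M^p * ((real u / M) * (real u / M)^(p-v))))"
      unfolding DC_expand[OF assms(2)] poly_euler_appell M_def[symmetric] PE_def[symmetric]
      by (simp add: sum_distrib_left mult_ac)
    also have "\<dots> = (\<Sum>u<m. \<Sum>v\<le>p. 2 * (-1)^u * (real (p choose v) * PE v) * (M^v / M * real u ^ (p+1-v)))"
      by (intro sum.cong refl) (metis atMost_iff term1)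
    also have "\<dots> = (\<Sum>v\<le>p. \<Sum>u<m. 2 * (-1)^u * (real (p choose v) * PE v) * (M^v / M * real u ^ (p+1-v)))"
      by (rule sum.swap)
    also have "\<dots> = (\<Sum>v\<le>p. real (p choose v) * PE v * (M^v / M) * (2 * (\<Sum>u<m. (-1)^u * real u ^ (p+1-v))))"
      by (simp add: sum_distrib_left mult_ac)
    finally show ?thesis .
  qed
  have S3: "2 * (\<Sum>u<m. (-1)^u * real u ^ n) = e n + euler_poly n M" for n
    using alt_power_sum[where m=m and n=n] assms(1) by (simp add: e_def M_def)
  have S4: "euler_poly (p+1-v) M = (\<Sum>i\<le>p-v. real ((p - v + 1) choose i) * e i * M^(p+1-v-i)) + e (p+1-v)"
    if "v \<le> p" for v
  proof -
    have "p + 1 - v = Suc (p - v)" using that by simp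
    thus ?thesis unfolding euler_poly_appell e_def by (simp add: sum.atMost_Suc)
  qed
  have S5: "real (p choose v) * PE v * (M^v / M) * (e (p+1-v) + euler_poly (p+1-v) M)
      = 2 * H v + (\<Sum>i\<le>p-v. F v i)" if "v \<le> p" for v
  proof -
    have t: "M^v / M * M^(p+1-v-i) = M^(p-i)" if "i \<le> p - v" for i
    proof -
      have "M^v * M^(p+1-v-i) = M * M^(p-i)" using that \<open>v \<le> p\<close>
        by (simp flip: power_add power_Suc) (simp add: Suc_diff_le)
      thus ?thesis using M0 by (simp add: field_simps)
    qed
    have "real (p choose v) * PE v * (M^v / M) * (\<Sum>i\<le>p-v. real ((p - v + 1) choose i) * e i * M^(p+1-v-i))
        = (\<Sum>i\<le>p-v. real (p choose v) * real ((p - v + 1) choose i) * PE v * e i * (M^v / M * M^(p+1-v-i)))"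
      by (simp add: sum_distrib_left mult_ac)
    also have "\<dots> = (\<Sum>i\<le>p-v. F v i)" unfolding F_def by (intro sum.cong refl) (metis atMost_iff t)
    finally have x: "real (p choose v) * PE v * (M^v / M) * (\<Sum>i\<le>p-v. real ((p - v + 1) choose i) * e i * M^(p+1-v-i))
        = (\<Sum>i\<le>p-v. F v i)" .
    show ?thesis unfolding S4[OF that] H_def powi_m1[OF M0[THEN less_imp_neq, symmetric]]
      using x by (simp add: algebra_simps)
  qed
  have S6: "M^p * poly_DC_sum k p 1 m = 2 * (\<Sum>v\<le>p. H v) + (\<Sum>i\<le>p. \<Sum>v\<le>p-i. F v i)"
  proof -
    have "M^p * poly_DC_sum k p 1 m = (\<Sum>v\<le>p. 2 * H v + (\<Sum>i\<le>p-v. F v i))"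
      unfolding S2 S3
    proof (rule sum.cong[OF refl])
      fix v assume "v \<in> {..p}"
      thus "real (p choose v) * PE v * (M ^ v / M) * (e (p + 1 - v) + euler_poly (p + 1 - v) M) =
        2 * H v + (\<Sum>i\<le>p-v. F v i)" by (intro S5) simp
    qed
    also have "\<dots> = 2 * (\<Sum>v\<le>p. H v) + (\<Sum>v\<le>p. \<Sum>i\<le>p-v. F v i)"
      by (simp only: sum.distrib sum_distrib_left)
    finally show ?thesis using triangle_swap[of F p] by linarith
  qed
  have p3: "p \<ge> 3" using assms(3,4) by (auto elim!: oddE)
  define q where "q = p - 2"
  have q: "p = Suc (Suc q)" "q \<ge> 1" using p3 by (auto simp: q_def)
  have G0: "(\<Sum>v\<le>p-0. F v 0) = M^p * poly_euler k p 1"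
    unfolding F_def poly_euler_appell by (simp add: sum_distrib_left e_def euler_num_0 PE_def M_def mult_ac)
  have G1: "(\<Sum>v\<le>p-Suc q. F v (Suc q)) = 0"
  proof -
    have "e (Suc q) = 0" unfolding e_def using q assms(3) by (intro euler_num_even) auto
    thus ?thesis unfolding F_def by simp
  qed
  have G2: "(\<Sum>v\<le>p-p. F v p) = real (p + 1) * e p"
    unfolding F_def by (simp add: PE_def poly_euler_num_0 binomial_Suc_n)
  have split: "(\<Sum>i\<le>p. \<Sum>v\<le>p-i. F v i) =
      (\<Sum>v\<le>p-0. F v 0) + (\<Sum>i=1..p-2. \<Sum>v\<le>p-i. F v i) + (\<Sum>v\<le>p-Suc q. F v (Suc q)) + (\<Sum>v\<le>p-p. F v p)"
  proof -
    have "(\<Sum>i\<le>p. \<Sum>v\<le>p-i. F v i) = (\<Sum>i\<le>q. \<Sum>v\<le>p-i. F v i) + (\<Sum>v\<le>p-Suc q. F v (Suc q)) + (\<Sum>v\<le>p-p. F v p)"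
      unfolding q(1) by (simp add: sum.atMost_Suc)
    moreover have "(\<Sum>i\<le>q. \<Sum>v\<le>p-i. F v i) = (\<Sum>v\<le>p-0. F v 0) + (\<Sum>i=1..q. \<Sum>v\<le>p-i. F v i)"
      by (simp add: atMost_atLeast0 sum.atLeast_Suc_atMost)
    moreover have "p - 2 = q" using q by simp
    ultimately show ?thesis by simp
  qed
  show ?thesis
    unfolding M_def[symmetric] S6 split G0 G1 G2
    by (simp add: F_def H_def PE_def e_def atLeast0AtMost)
qed

end
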